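(* Let $\alpha>0$, let $C_n=\bigl(1/\max\{i,j\}\bigr)_{i,j=1}^n$, and let $A_n=(\alpha I_n+C_n)^{-1}$ for $n\in\mathbb N$. Then each $A_n$ is Hermitian positive definite, $\inf_n\min\{|z|:z\in\sigma(A_n)\}>0$ and $\sup_n\|A_n\|_\infty<\infty$, but $\sup_n\|A_n^{-1}\|_\infty=\infty$.
   Context: $\|\cdot\|_\infty$ is the operator norm induced by the max-norm on $\mathbb C^n$ (maximum absolute row sum); $\sigma(\cdot)$ denotes the spectrum. *)

theory Defs
  imports "Jordan_Normal_Form.Char_Poly"
begin

text \<open>The matrix C_n = (1 / max{i,j})_{i,j=1..n}; JNF matrices are 0-indexed,
  so entry (i,j) with i,j < n corresponds to the paper's entry (i+1,j+1).\<close>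
definition Cmat :: "nat \<Rightarrow> complex mat" where
  "Cmat n = mat n n (\<lambda>(i,j). 1 / of_nat (max (i+1) (j+1)))"

definition mat_inv :: "complex mat \<Rightarrow> complex mat" where
  "mat_inv M = (SOME B. B \<in> carrier_mat (dim_row M) (dim_row M) \<and> inverts_mat M B \<and> inverts_mat B M)"

definition Amat :: "real \<Rightarrow> nat \<Rightarrow> complex mat" where
  "Amat \<alpha> n = mat_inv (complex_of_real \<alpha> \<cdot>\<^sub>m 1\<^sub>m n + Cmat n)"

definition hermitian_mat :: "complex mat \<Rightarrow> bool" where
  "hermitian_mat A \<longleftrightarrow> square_mat A \<and>
     (\<forall>i < dim_row A. \<forall>j < dim_row A. A $$ (j,i) = cnj (A $$ (i,j)))"

definition hermitian_pos_def :: "complex mat \<Rightarrow> bool" where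
  "hermitian_pos_def A \<longleftrightarrow> hermitian_mat A \<and>
     (\<forall>v \<in> carrier_vec (dim_row A). v \<noteq> 0\<^sub>v (dim_row A) \<longrightarrow>
        (let q = (A *\<^sub>v v) \<bullet>c v in q \<in> \<real> \<and> Re q > 0))"

definition spectrum_mat :: "complex mat \<Rightarrow> complex set" where
  "spectrum_mat A = {z. eigenvalue A z}"

text \<open>Operator norm induced by the max-norm: maximum absolute row sum.\<close>
definition norm_inf_mat :: "complex mat \<Rightarrow> real" where
  "norm_inf_mat A = Max {\<Sum>j<dim_col A. cmod (A $$ (i,j)) | i. i < dim_row A}"

end

theory Submission
  imports Defs "Jordan_Normal_Form.Spectral_Radius"
begin

lemma sqrt_step1:
  fixes m :: nat
  shows "1 / sqrt (real m + 1) \<le> 2 * (sqrt (real m + 1) - sqrt (real m))"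
proof -
  define a where "a = sqrt (real m + 1)"
  define b where "b = sqrt (real m)"
  have a0: "a > 0" unfolding a_def by simp
  have b0: "b \<ge> 0" unfolding b_def by simp
  have ba: "b \<le> a" unfolding a_def b_def by simp
  have sq: "a * a - b * b = 1" unfolding a_def b_def by simp
  have "(a - b) * (a + b) = 1" using sq by (simp add: algebra_simps)
  moreover have "(a - b) * (a + b) \<le> (a - b) * (2 * a)" using ba by (intro mult_left_mono) auto
  ultimately have "1 \<le> 2 * (a - b) * a" by (simp add: algebra_simps)
  hence "1 / a \<le> 2 * (a - b)" using a0 by (simp add: pos_divide_le_eq)
  thus ?thesis unfolding a_def b_def .
qed

lemma sum_inv_sqrt: "(\<Sum>j<m. 1 / sqrt (real j + 1)) \<le> 2 * sqrt (real m)"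
proof (induction m)
  case 0 then show ?case by simp
next
  case (Suc m)
  have "(\<Sum>j<Suc m. 1 / sqrt (real j + 1)) = (\<Sum>j<m. 1 / sqrt (real j + 1)) + 1 / sqrt (real m + 1)"
    by simp
  also have "\<dots> \<le> 2 * sqrt (real m) + 2 * (sqrt (real m + 1) - sqrt (real m))"
    using Suc sqrt_step1[of m] by linarith
  finally show ?case by (simp add: add.commute)
qed

lemma sqrt_step2:
  fixes t :: real
  assumes "t \<ge> 1"
  shows "1 / ((t + 1) * sqrt (t + 1)) \<le> 2 / sqrt t - 2 / sqrt (t + 1)"
proof -
  define a where "a = sqrt (t + 1)"
  define b where "b = sqrt t"
  have b0: "b > 0" unfolding b_def using assms by simp
  have ba: "b \<le> a" unfolding a_def b_def by simp
  have a0: "a > 0" using b0 ba by simp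
  have sq: "a * a - b * b = 1" unfolding a_def b_def using assms by simp
  have ta: "t + 1 = a * a" unfolding a_def using assms by simp
  have "(a - b) * (a + b) = 1" using sq by (simp add: algebra_simps)
  have key: "a * b * (a + b) \<le> 2 * (a * a * a)"
  proof -
    have "a * b \<le> a * a" using ba a0 by (simp add: mult_left_mono)
    moreover have "a + b \<le> 2 * a" using ba by simp
    ultimately have "a * b * (a + b) \<le> a * a * (2 * a)"
      using a0 b0 by (intro mult_mono) auto
    thus ?thesis by (simp add: algebra_simps)
  qed
  have "2 / b - 2 / a = 2 * (a - b) / (a * b)" using a0 b0 by (simp add: field_simps)
  also have "\<dots> = 2 / (a * b * (a + b))"
  proof -
    have e: "a - b = 1 / (a + b)" using \<open>(a - b) * (a + b) = 1\<close> a0 b0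
      by (simp add: eq_divide_eq)
    have "2 * (a - b) / (a * b) = 2 * (1 / (a + b)) / (a * b)" by (simp only: e)
    also have "\<dots> = 2 / (a * b * (a + b))" using a0 b0 by (simp add: field_simps)
    finally show ?thesis .
  qed
  finally have eq: "2 / b - 2 / a = 2 / (a * b * (a + b))" .
  have g: "(t + 1) * sqrt (t + 1) = a * a * a" unfolding a_def using assms by simp
  have "1 / ((t + 1) * sqrt (t + 1)) = 1 / (a * a * a)" by (simp only: g)
  also have "\<dots> \<le> 2 / (a * b * (a + b))"
    using key a0 b0 by (simp add: divide_simps)
  also have "\<dots> = 2 / b - 2 / a" using eq by simp
  finally show ?thesis unfolding a_def b_def .
qed

lemma sum_tail_sqrt:
  "(\<Sum>j\<in>{i<..<i+1+m}. 1 / ((real j + 1) * sqrt (real j + 1)))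
     \<le> 2 / sqrt (real i + 1) - 2 / sqrt (real (i + 1 + m))"
proof (induction m)
  case 0
  have "{i<..<i+1+0} = {}" by auto
  then show ?case by (simp add: add.commute)
next
  case (Suc m)
  have set: "{i<..<i+1+Suc m} = insert (i+1+m) {i<..<i+1+m}" by auto
  have "(\<Sum>j\<in>{i<..<i+1+Suc m}. 1 / ((real j + 1) * sqrt (real j + 1)))
     = 1 / ((real (i+1+m) + 1) * sqrt (real (i+1+m) + 1)) + (\<Sum>j\<in>{i<..<i+1+m}. 1 / ((real j + 1) * sqrt (real j + 1)))"
    unfolding set by (subst sum.insert) auto
  also have "\<dots> \<le> (2 / sqrt (real (i+1+m)) - 2 / sqrt (real (i+1+m) + 1)) + (2 / sqrt (real i + 1) - 2 / sqrt (real (i + 1 + m)))"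
    using Suc sqrt_step2[of "real (i+1+m)"] by (intro add_mono) auto
  finally show ?case by simp
qed

lemma sum_tail_sqrt': "(\<Sum>j\<in>{i<..<n}. 1 / ((real j + 1) * sqrt (real j + 1))) \<le> 2 / sqrt (real i + 1)"
proof (cases "n \<le> i + 1")
  case True
  hence "{i<..<n} = {}" by auto
  thus ?thesis by simp
next
  case False
  then obtain m where n: "n = i + 1 + m" by (metis le_add1 le_iff_add nat_le_linear)
  have "0 \<le> 2 / sqrt (real (i + 1 + m))" by simp
  thus ?thesis using sum_tail_sqrt[of i m] unfolding n by linarith
qed

lemma weight_bound:
  assumes "i < n"
  shows "(\<Sum>j<n. 1 / (sqrt (real j + 1) * real (max (i+1) (j+1)))) \<le> 4 / sqrt (real i + 1)"
proof -
  let ?f = "\<lambda>j. 1 / (sqrt (real j + 1) * real (max (i+1) (j+1)))"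
  have split: "{..<n} = {..<i+1} \<union> {i<..<n}" using assms by auto
  have "(\<Sum>j<n. ?f j) = (\<Sum>j<i+1. ?f j) + (\<Sum>j\<in>{i<..<n}. ?f j)"
    unfolding split by (subst sum.union_disjoint) auto
  also have "(\<Sum>j<i+1. ?f j) = (\<Sum>j<i+1. 1 / sqrt (real j + 1)) / (real i + 1)"
  proof -
    have "(\<Sum>j<i+1. ?f j) = (\<Sum>j<i+1. 1 / sqrt (real j + 1) / (real i + 1))"
      by (intro sum.cong) (auto simp: max_def)
    thus ?thesis by (simp only: sum_divide_distrib)
  qed
  also have "\<dots> \<le> 2 * sqrt (real (i+1)) / (real i + 1)"
    using sum_inv_sqrt[of "i+1"] by (intro divide_right_mono) auto
  also have "2 * sqrt (real (i+1)) / (real i + 1) = 2 / sqrt (real i + 1)"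
  proof -
    define s where "s = sqrt (real i + 1)"
    have s0: "s > 0" unfolding s_def by simp
    have "real i + 1 = s * s" unfolding s_def by simp
    hence "2 * sqrt (real (i+1)) / (real i + 1) = 2 * s / (s * s)" unfolding s_def by (simp add: add.commute)
    also have "\<dots> = 2 / s" using s0 by simp
    finally show ?thesis unfolding s_def .
  qed
  also have "(\<Sum>j\<in>{i<..<n}. ?f j) = (\<Sum>j\<in>{i<..<n}. 1 / ((real j + 1) * sqrt (real j + 1)))"
    by (intro sum.cong) (auto simp: max_def mult.commute)
  also have "\<dots> \<le> 2 / sqrt (real i + 1)" by (rule sum_tail_sqrt')
  finally show ?thesis by simp
qed

lemma div_diff_aux:
  fixes u a b :: complex
  assumes "a \<noteq> 0" "b \<noteq> 0" "b - a = 1"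
  shows "u / a - u / b = u / (a * b)"
proof -
  have "u / a - u / b = u * (b - a) / (a * b)" using assms by (simp add: field_simps)
  thus ?thesis using assms(3) by simp
qed

definition Cf :: "nat \<Rightarrow> (nat \<Rightarrow> complex) \<Rightarrow> nat \<Rightarrow> complex" where
  "Cf n u k = (\<Sum>j<n. u j / of_nat (max (k+1) (j+1)))"

lemma Cf_diff:
  assumes "Suc k < n"
  shows "Cf n u k - Cf n u (Suc k) = (\<Sum>j\<le>k. u j) / of_nat ((k+1)*(k+2))"
proof -
  have "Cf n u k - Cf n u (Suc k) = (\<Sum>j<n. u j / of_nat (max (k+1) (j+1)) - u j / of_nat (max (Suc k+1) (j+1)))"
    unfolding Cf_def by (simp add: sum_subtractf)
  also have "\<dots> = (\<Sum>j<n. if j \<in> {..k} then u j / of_nat ((k+1)*(k+2)) else 0)"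
  proof (intro sum.cong refl)
    fix j assume "j \<in> {..<n}"
    show "u j / of_nat (max (k+1) (j+1)) - u j / of_nat (max (Suc k+1) (j+1))
        = (if j \<in> {..k} then u j / of_nat ((k+1)*(k+2)) else 0)"
    proof (cases "j \<le> k")
      case True
      hence "max (k+1) (j+1) = k+1" "max (Suc k+1) (j+1) = k+2" by auto
      have "u j / of_nat (k+1) - u j / of_nat (k+2) = u j / (of_nat (k+1) * of_nat (k+2))"
        by (rule div_diff_aux) (simp_all only: of_nat_eq_0_iff, simp_all)
      thus ?thesis using True \<open>max (k+1) (j+1) = k+1\<close> \<open>max (Suc k+1) (j+1) = k+2\<close>
        by (simp only: of_nat_mult) simp
    next
      case False
      hence "max (k+1) (j+1) = j+1" "max (Suc k+1) (j+1) = j+1" by auto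
      thus ?thesis using False by simp
    qed
  qed
  also have "\<dots> = (\<Sum>j\<in>{..<n} \<inter> {..k}. u j / of_nat ((k+1)*(k+2)))"
    by (subst sum.inter_restrict) auto
  also have "{..<n} \<inter> {..k} = {..k}" using assms by auto
  finally show ?thesis by (simp add: sum_divide_distrib)
qed

lemma Cf_last:
  assumes "0 < n"
  shows "Cf n u (n - 1) = (\<Sum>j<n. u j) / of_nat n"
proof -
  have "Cf n u (n - 1) = (\<Sum>j<n. u j / of_nat n)"
    unfolding Cf_def using assms by (intro sum.cong) (auto simp: max_def)
  thus ?thesis by (simp add: sum_divide_distrib)
qed

lemma re_cnj_diff:
  assumes "cmod b \<le> cmod a"
  shows "0 \<le> Re (cnj a * (a - b))"
proof -
  have "Re (cnj a * a) = cmod a ^ 2" by (simp add: complex_mult_cnj cmod_power2 mult.commute)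
  moreover have "Re (cnj a * b) \<le> cmod a * cmod b"
    using complex_Re_le_cmod[of "cnj a * b"] by (simp add: norm_mult)
  moreover have "cmod a * cmod b \<le> cmod a ^ 2"
    using assms by (simp add: power2_eq_square mult_left_mono)
  ultimately show ?thesis by (simp add: algebra_simps)
qed

lemma Re_mult_of_nat: "Re (z * of_nat c) = Re z * real c"
  by simp

lemma max_principle:
  assumes i: "i < n" and mx: "\<forall>k<n. cmod (Cf n u k) \<le> cmod (Cf n u i)"
  shows "0 \<le> Re (cnj (Cf n u i) * u i)"
proof -
  define x where "x = Cf n u"
  define W where "W m = (\<Sum>j\<le>m. u j)" for m
  have mx': "\<And>k. k < n \<Longrightarrow> cmod (x k) \<le> cmod (x i)" using mx unfolding x_def by auto
  have Wd: "W m = (x m - x (Suc m)) * of_nat ((m+1)*(m+2))" if "Suc m < n" for m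
  proof -
    define c :: complex where "c = of_nat ((m+1)*(m+2))"
    have c0: "c \<noteq> 0" unfolding c_def by (simp only: of_nat_eq_0_iff) simp
    have "x m - x (Suc m) = W m / c"
      unfolding x_def W_def c_def by (rule Cf_diff[OF that])
    hence "W m = (x m - x (Suc m)) * c" using c0 by simp
    thus ?thesis unfolding c_def .
  qed
  have F1: "0 \<le> Re (cnj (x i) * W i)"
  proof (cases "Suc i < n")
    case True
    have "Re (cnj (x i) * W i) = Re (cnj (x i) * (x i - x (Suc i))) * real ((i+1)*(i+2))"
      unfolding Wd[OF True] by (simp only: mult.assoc[symmetric] Re_mult_of_nat)
    moreover have "0 \<le> Re (cnj (x i) * (x i - x (Suc i)))"
      by (rule re_cnj_diff) (rule mx'[OF True])
    ultimately show ?thesis by simp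
  next
    case False
    hence ii: "i = n - 1" using i by simp
    have "{..i} = {..<n}" using i False by auto
    hence "W i = x i * of_nat n"
      unfolding W_def x_def ii using Cf_last[of n u] i by simp
    hence "Re (cnj (x i) * W i) = Re (cnj (x i) * x i) * real n"
      by (simp only: mult.assoc[symmetric] Re_mult_of_nat)
    moreover have "Re (cnj (x i) * x i) = cmod (x i) ^ 2"
      by (simp add: complex_mult_cnj cmod_power2 mult.commute)
    ultimately show ?thesis by simp
  qed
  show ?thesis
  proof (cases i)
    case 0
    have "u i = W i" unfolding W_def 0 by simp
    thus ?thesis using F1 unfolding x_def by simp
  next
    case (Suc p)
    have "Suc p < n" using i Suc by simp
    have F2: "Re (cnj (x i) * W p) \<le> 0"
    proof -
      have e1: "Re (cnj (x i) * W p) = Re (cnj (x i) * (x p - x i)) * real ((p+1)*(p+2))"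
        unfolding Wd[OF \<open>Suc p < n\<close>] Suc by (simp only: mult.assoc[symmetric] Re_mult_of_nat)
      have r: "0 \<le> Re (cnj (x i) * (x i - x p))"
        by (rule re_cnj_diff) (rule mx', use \<open>Suc p < n\<close> in simp)
      have e2: "Re (cnj (x i) * (x p - x i)) = - Re (cnj (x i) * (x i - x p))"
        by (simp add: algebra_simps)
      have "0 \<le> Re (cnj (x i) * (x i - x p)) * real ((p+1)*(p+2))" using r by simp
      thus ?thesis unfolding e1 e2 by (simp only: mult_minus_left)
    qed
    have "u i = W i - W p" unfolding W_def Suc by simp
    hence "cnj (x i) * u i = cnj (x i) * W i - cnj (x i) * W p" by (simp add: right_diff_distrib)
    hence "Re (cnj (x i) * u i) = Re (cnj (x i) * W i) - Re (cnj (x i) * W p)"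
      by (simp only: minus_complex.sel)
    thus ?thesis using F1 F2 unfolding x_def by simp
  qed
qed

lemma cmod_add_sq: "cmod (a + b) ^ 2 = cmod a ^ 2 + 2 * Re (cnj a * b) + cmod b ^ 2"
  unfolding cmod_power2 by (simp add: power2_eq_square algebra_simps)

lemma max_principle2:
  assumes "\<alpha> \<ge> 0" "i < n" "\<forall>k<n. cmod (Cf n u k) \<le> cmod (Cf n u i)"
  shows "cmod (Cf n u i) \<le> cmod (of_real \<alpha> * u i + Cf n u i)"
proof -
  let ?a = "Cf n u i" and ?b = "of_real \<alpha> * u i"
  have "Re (cnj ?a * ?b) = \<alpha> * Re (cnj ?a * u i)" by (simp add: algebra_simps)
  hence "0 \<le> Re (cnj ?a * ?b)" using max_principle[OF assms(2,3)] assms(1) by simp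
  moreover have "0 \<le> cmod ?b ^ 2" by simp
  ultimately have "cmod ?a ^ 2 \<le> cmod (?a + ?b) ^ 2" using cmod_add_sq[of ?a ?b] by linarith
  hence "cmod ?a \<le> cmod (?a + ?b)" by (rule power2_le_imp_le) simp
  thus ?thesis by (simp add: add.commute)
qed

lemma ex_argmax:
  fixes f :: "nat \<Rightarrow> real"
  assumes "0 < n"
  obtains i where "i < n" "\<And>k. k < n \<Longrightarrow> f k \<le> f i"
proof -
  have fin: "finite (f ` {..<n})" and ne: "f ` {..<n} \<noteq> {}" using assms by auto
  from Max_in[OF fin ne] obtain i where "i < n" "f i = Max (f ` {..<n})" by auto
  moreover have "\<And>k. k < n \<Longrightarrow> f k \<le> Max (f ` {..<n})" using fin by auto
  ultimately show ?thesis using that by metis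
qed

lemma bound_sol:
  assumes a: "\<alpha> > 0" and Y: "\<forall>k<n. cmod (of_real \<alpha> * u k + Cf n u k) \<le> Y" and k: "k < n"
  shows "cmod (u k) \<le> 2 * Y / \<alpha>"
proof -
  obtain i where i: "i < n" and mx: "\<And>k. k < n \<Longrightarrow> cmod (Cf n u k) \<le> cmod (Cf n u i)"
    using ex_argmax[of n "\<lambda>k. cmod (Cf n u k)"] k by auto
  have "cmod (Cf n u i) \<le> cmod (of_real \<alpha> * u i + Cf n u i)"
    using max_principle2[of \<alpha> i n u] a i mx by auto
  also have "\<dots> \<le> Y" using Y i by auto
  finally have xk: "cmod (Cf n u k) \<le> Y" using mx[OF k] by linarith
  have "\<alpha> * cmod (u k) = cmod ((of_real \<alpha> * u k + Cf n u k) - Cf n u k)"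
    using a by (simp add: norm_mult)
  also have "\<dots> \<le> cmod (of_real \<alpha> * u k + Cf n u k) + cmod (Cf n u k)" by (rule norm_triangle_ineq4)
  also have "\<dots> \<le> 2 * Y" using Y k xk by auto
  finally show ?thesis using a by (simp add: field_simps)
qed

lemma eig_bound:
  assumes a: "\<alpha> \<ge> 0" and ev: "\<forall>k<n. of_real \<alpha> * v k + Cf n v k = \<mu> * v k"
    and k0: "k0 < n" "v k0 \<noteq> 0"
  shows "cmod \<mu> \<le> \<alpha> + 4"
proof -
  define g where "g k = cmod (v k) * sqrt (real k + 1)" for k
  obtain i where i: "i < n" and mx: "\<And>k. k < n \<Longrightarrow> g k \<le> g i"
    using ex_argmax[of n g] k0 by auto
  have "0 < g k0" unfolding g_def using k0 by simp
  hence gi: "0 < g i" using mx[OF k0(1)] by simp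
  have si: "sqrt (real i + 1) > 0" by simp
  have vi: "cmod (v i) > 0" using gi unfolding g_def by (simp add: zero_less_mult_iff)
  have vj: "cmod (v j) \<le> g i / sqrt (real j + 1)" if "j < n" for j
    using mx[OF that] unfolding g_def by (simp add: field_simps)
  have "cmod (Cf n v i) \<le> (\<Sum>j<n. cmod (v j / of_nat (max (i+1) (j+1))))"
    unfolding Cf_def by (rule norm_sum)
  also have "\<dots> \<le> (\<Sum>j<n. g i * (1 / (sqrt (real j + 1) * real (max (i+1) (j+1)))))"
  proof (intro sum_mono)
    fix j assume j: "j \<in> {..<n}"
    have "cmod (of_nat (max (i+1) (j+1))) = real (max (i+1) (j+1))" by (rule norm_of_nat)
    hence "cmod (v j / of_nat (max (i+1) (j+1))) = cmod (v j) / real (max (i+1) (j+1))"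
      by (simp only: norm_divide)
    also have "\<dots> \<le> g i / sqrt (real j + 1) / real (max (i+1) (j+1))"
      using vj j by (intro divide_right_mono) auto
    finally show "cmod (v j / of_nat (max (i+1) (j+1))) \<le> g i * (1 / (sqrt (real j + 1) * real (max (i+1) (j+1))))"
      by simp
  qed
  also have "\<dots> = g i * (\<Sum>j<n. 1 / (sqrt (real j + 1) * real (max (i+1) (j+1))))"
    by (simp add: sum_distrib_left)
  also have "\<dots> \<le> g i * (4 / sqrt (real i + 1))"
    using weight_bound[OF i] gi by (intro mult_left_mono) auto
  also have "\<dots> = 4 * cmod (v i)" unfolding g_def using si by simp
  finally have xi: "cmod (Cf n v i) \<le> 4 * cmod (v i)" .
  have "cmod \<mu> * cmod (v i) = cmod (of_real \<alpha> * v i + Cf n v i)"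
    using ev i by (simp add: norm_mult)
  also have "\<dots> \<le> cmod (of_real \<alpha> * v i) + cmod (Cf n v i)" by (rule norm_triangle_ineq)
  also have "\<dots> \<le> (\<alpha> + 4) * cmod (v i)" using xi a by (simp add: norm_mult algebra_simps)
  finally show ?thesis using vi by simp
qed

definition dw :: "nat \<Rightarrow> nat \<Rightarrow> real" where
  "dw n m = (if Suc m < n then 1 / (real (m+1) * real (m+2)) else 1 / real n)"

lemma frac_aux:
  fixes x :: real
  assumes x: "0 \<le> x"
  shows "1 / ((x + 1) * (x + 2)) + 1 / (x + 2) = 1 / (x + 1)"
proof -
  have a: "x + 1 \<noteq> 0" "x + 2 \<noteq> 0" using x by linarith+
  have e1: "1 / (x + 2) = (x + 1) / ((x + 1) * (x + 2))" using a by simp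
  have "1 / ((x + 1) * (x + 2)) + (x + 1) / ((x + 1) * (x + 2)) = (1 + (x + 1)) / ((x + 1) * (x + 2))"
    by (rule add_divide_distrib[symmetric])
  also have "1 + (x + 1) = x + 2" by simp
  also have "(x + 2) / ((x + 1) * (x + 2)) = 1 / (x + 1)" using a by simp
  finally show ?thesis using e1 by simp
qed

lemma dw_nonneg: "0 \<le> dw n m"
  unfolding dw_def by simp

lemma dw_tele:
  assumes "a < n"
  shows "(\<Sum>m\<in>{a..<n}. dw n m) = 1 / real (a+1)"
proof -
  have "a \<le> n - 1" using assms by simp
  then show ?thesis
  proof (induction a rule: inc_induct)
    case base
    have "{n-1..<n} = {n-1}" using assms by auto
    moreover have "dw n (n-1) = 1 / real n" unfolding dw_def using assms by simp
    ultimately show ?case using assms by simp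
  next
    case (step m)
    have "{m..<n} = insert m {Suc m..<n}" using step by auto
    hence "(\<Sum>i\<in>{m..<n}. dw n i) = dw n m + (\<Sum>i\<in>{Suc m..<n}. dw n i)" by simp
    also have "\<dots> = 1 / (real (m+1) * real (m+2)) + 1 / real (Suc m + 1)"
    proof -
      have "dw n m = 1 / (real (m+1) * real (m+2))" unfolding dw_def using step(2) by auto
      moreover have "(\<Sum>i\<in>{Suc m..<n}. dw n i) = 1 / real (Suc m + 1)" by (rule step(3))
      ultimately show ?thesis by simp
    qed
    also have "\<dots> = 1 / real (m + 1)" using frac_aux[of "real m"] by (simp add: add.commute add.left_commute)
    finally show ?case .
  qed
qed

lemma inv_max_eq:
  assumes "k < n" "j < n"
  shows "1 / real (max (k+1) (j+1)) = (\<Sum>m<n. if k \<le> m \<and> j \<le> m then dw n m else 0)"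
proof -
  have "(\<Sum>m<n. if k \<le> m \<and> j \<le> m then dw n m else 0)
      = (\<Sum>m\<in>{..<n} \<inter> {m. k \<le> m \<and> j \<le> m}. dw n m)"
    by (subst sum.inter_restrict) auto
  also have "{..<n} \<inter> {m. k \<le> m \<and> j \<le> m} = {max k j..<n}" by auto
  also have "(\<Sum>m\<in>{max k j..<n}. dw n m) = 1 / real (max k j + 1)"
    using assms by (intro dw_tele) auto
  also have "max k j + 1 = max (k+1) (j+1)" by simp
  finally show ?thesis by simp
qed

lemma psd_sum:
  "(\<Sum>k<n. u k * cnj (Cf n u k)) = of_real (\<Sum>m<n. dw n m * cmod (\<Sum>j\<le>m. u j) ^ 2)"
proof -
  define W where "W m = (\<Sum>j\<le>m. u j)" for m
  have step1: "u k * cnj (Cf n u k) = (\<Sum>j<n. \<Sum>m<n. if k \<le> m \<and> j \<le> m then of_real (dw n m) * (u k * cnj (u j)) else 0)"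
    if k: "k < n" for k
  proof -
    have "u k * cnj (Cf n u k) = (\<Sum>j<n. u k * (cnj (u j) / of_nat (max (k+1) (j+1))))"
      unfolding Cf_def by (simp add: cnj_sum sum_distrib_left)
    also have "\<dots> = (\<Sum>j<n. \<Sum>m<n. if k \<le> m \<and> j \<le> m then of_real (dw n m) * (u k * cnj (u j)) else 0)"
    proof (intro sum.cong refl)
      fix j assume j: "j \<in> {..<n}"
      have "u k * (cnj (u j) / of_nat (max (k+1) (j+1))) = (u k * cnj (u j)) * of_real (1 / real (max (k+1) (j+1)))"
        by (simp add: divide_inverse of_real_inverse[symmetric])
      also have "\<dots> = (u k * cnj (u j)) * of_real (\<Sum>m<n. if k \<le> m \<and> j \<le> m then dw n m else 0)"
        using inv_max_eq[of k n j] k j by simp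
      also have "\<dots> = (\<Sum>m<n. if k \<le> m \<and> j \<le> m then of_real (dw n m) * (u k * cnj (u j)) else 0)"
        unfolding of_real_sum sum_distrib_left by (intro sum.cong refl) auto
      finally show "u k * (cnj (u j) / of_nat (max (k+1) (j+1))) = \<dots>" .
    qed
    finally show ?thesis .
  qed
  have step2: "(\<Sum>k<n. \<Sum>j<n. if k \<le> m \<and> j \<le> m then of_real (dw n m) * (u k * cnj (u j)) else 0)
      = of_real (dw n m * cmod (W m) ^ 2)" if m: "m < n" for m
  proof -
    define a where "a k = (if k \<le> m then u k else 0)" for k
    define b where "b j = (if j \<le> m then cnj (u j) else 0)" for j
    have "(\<Sum>k<n. \<Sum>j<n. if k \<le> m \<and> j \<le> m then of_real (dw n m) * (u k * cnj (u j)) else 0)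
        = (\<Sum>k<n. \<Sum>j<n. of_real (dw n m) * (a k * b j))"
      unfolding a_def b_def by (intro sum.cong refl) auto
    also have "\<dots> = of_real (dw n m) * (\<Sum>k<n. \<Sum>j<n. a k * b j)"
      by (simp only: sum_distrib_left)
    also have "(\<Sum>k<n. \<Sum>j<n. a k * b j) = (\<Sum>k<n. a k) * (\<Sum>j<n. b j)"
      by (rule sum_product[symmetric])
    also have "(\<Sum>k<n. a k) = W m"
    proof -
      have "(\<Sum>k<n. a k) = (\<Sum>k\<in>{..<n} \<inter> {..m}. u k)"
        unfolding a_def by (subst sum.inter_restrict) auto
      also have "{..<n} \<inter> {..m} = {..m}" using m by auto
      finally show ?thesis unfolding W_def .
    qed
    also have "(\<Sum>j<n. b j) = cnj (W m)"
    proof -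
      have "(\<Sum>j<n. b j) = (\<Sum>j\<in>{..<n} \<inter> {..m}. cnj (u j))"
        unfolding b_def by (subst sum.inter_restrict) auto
      also have "{..<n} \<inter> {..m} = {..m}" using m by auto
      finally show ?thesis unfolding W_def by (simp add: cnj_sum)
    qed
    also have "W m * cnj (W m) = of_real (cmod (W m) ^ 2)"
      by (simp only: complex_norm_square)
    finally show ?thesis by simp
  qed
  have "(\<Sum>k<n. u k * cnj (Cf n u k))
      = (\<Sum>k<n. \<Sum>j<n. \<Sum>m<n. if k \<le> m \<and> j \<le> m then of_real (dw n m) * (u k * cnj (u j)) else 0)"
    using step1 by (intro sum.cong refl) auto
  also have "\<dots> = (\<Sum>k<n. \<Sum>m<n. \<Sum>j<n. if k \<le> m \<and> j \<le> m then of_real (dw n m) * (u k * cnj (u j)) else 0)"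
    by (rule sum.cong[OF refl]) (rule sum.swap)
  also have "\<dots> = (\<Sum>m<n. \<Sum>k<n. \<Sum>j<n. if k \<le> m \<and> j \<le> m then of_real (dw n m) * (u k * cnj (u j)) else 0)"
    by (rule sum.swap)
  also have "\<dots> = (\<Sum>m<n. of_real (dw n m * cmod (W m) ^ 2))"
    using step2 by (intro sum.cong refl) auto
  finally show ?thesis unfolding W_def by simp
qed

definition Mm :: "real \<Rightarrow> nat \<Rightarrow> complex mat" where
  "Mm \<alpha> n = complex_of_real \<alpha> \<cdot>\<^sub>m 1\<^sub>m n + Cmat n"

lemma Amat_Mm: "Amat \<alpha> n = mat_inv (Mm \<alpha> n)"
  unfolding Amat_def Mm_def ..

lemma Mm_carrier[simp]: "Mm \<alpha> n \<in> carrier_mat n n"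
  unfolding Mm_def Cmat_def by auto

lemma Mm_dims[simp]: "dim_row (Mm \<alpha> n) = n" "dim_col (Mm \<alpha> n) = n"
  using carrier_matD[OF Mm_carrier[of \<alpha> n]] by auto

lemma Mm_entry:
  assumes "i < n" "j < n"
  shows "Mm \<alpha> n $$ (i,j) = complex_of_real ((if i = j then \<alpha> else 0) + 1 / real (max (i+1) (j+1)))"
  using assms unfolding Mm_def Cmat_def by (simp add: of_real_divide)

lemma Mm_mult:
  assumes v: "v \<in> carrier_vec n" and k: "k < n"
  shows "(Mm \<alpha> n *\<^sub>v v) $ k = of_real \<alpha> * v $ k + Cf n (\<lambda>j. v $ j) k"
proof -
  have "(Mm \<alpha> n *\<^sub>v v) $ k = (\<Sum>j\<in>{0..<n}. Mm \<alpha> n $$ (k,j) * v $ j)"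
    using v k by (simp add: scalar_prod_def)
  also have "\<dots> = (\<Sum>j<n. (if k = j then of_real \<alpha> * v $ j else 0) + v $ j / of_nat (max (k+1) (j+1)))"
    by (intro sum.cong) (auto simp: Mm_entry k distrib_right of_real_divide divide_inverse)
  also have "\<dots> = of_real \<alpha> * v $ k + Cf n (\<lambda>j. v $ j) k"
    unfolding Cf_def sum.distrib using k by simp
  finally show ?thesis .
qed

lemma Mm_inj:
  assumes a: "\<alpha> > 0" and v: "v \<in> carrier_vec n" and z: "Mm \<alpha> n *\<^sub>v v = 0\<^sub>v n"
  shows "v = 0\<^sub>v n"
proof (rule eq_vecI)
  have Y: "\<forall>k<n. cmod (of_real \<alpha> * v $ k + Cf n (\<lambda>j. v $ j) k) \<le> 0"
  proof (intro allI impI)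
    fix k assume k: "k < n"
    have "of_real \<alpha> * v $ k + Cf n (\<lambda>j. v $ j) k = (Mm \<alpha> n *\<^sub>v v) $ k" using Mm_mult[OF v k] by simp
    also have "\<dots> = 0" using z k by simp
    finally show "cmod (of_real \<alpha> * v $ k + Cf n (\<lambda>j. v $ j) k) \<le> 0" by simp
  qed
  fix i assume "i < dim_vec (0\<^sub>v n :: complex vec)"
  hence i: "i < n" by simp
  have "cmod (v $ i) \<le> 2 * 0 / \<alpha>" by (rule bound_sol[OF a Y i])
  thus "v $ i = 0\<^sub>v n $ i" using i by simp
next
  show "dim_vec v = dim_vec (0\<^sub>v n :: complex vec)" using v by simp
qed

lemma A_props:
  assumes a: "\<alpha> > 0"
  shows "Amat \<alpha> n \<in> carrier_mat n n \<and> Mm \<alpha> n * Amat \<alpha> n = 1\<^sub>m n \<and> Amat \<alpha> n * Mm \<alpha> n = 1\<^sub>m n"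
proof -
  have "det (Mm \<alpha> n) \<noteq> 0"
  proof
    assume "det (Mm \<alpha> n) = 0"
    then obtain v where "v \<in> carrier_vec n" "v \<noteq> 0\<^sub>v n" "Mm \<alpha> n *\<^sub>v v = 0\<^sub>v n"
      using det_0_iff_vec_prod_zero[OF Mm_carrier] by blast
    thus False using Mm_inj[OF a] by blast
  qed
  from det_non_zero_imp_unit[OF Mm_carrier this, of undefined]
  obtain Q where Q: "Q \<in> carrier_mat n n" "Q * Mm \<alpha> n = 1\<^sub>m n" "Mm \<alpha> n * Q = 1\<^sub>m n"
    unfolding Units_def ring_mat_def by auto
  let ?P = "\<lambda>B. B \<in> carrier_mat (dim_row (Mm \<alpha> n)) (dim_row (Mm \<alpha> n)) \<and> inverts_mat (Mm \<alpha> n) B \<and> inverts_mat B (Mm \<alpha> n)"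
  have "?P Q" using Q unfolding inverts_mat_def by auto
  hence "?P (mat_inv (Mm \<alpha> n))" unfolding mat_inv_def by (rule someI)
  thus ?thesis unfolding Amat_Mm inverts_mat_def by auto
qed

lemma inv_Amat:
  assumes a: "\<alpha> > 0"
  shows "mat_inv (Amat \<alpha> n) = Mm \<alpha> n"
proof -
  let ?A = "Amat \<alpha> n" and ?M = "Mm \<alpha> n"
  have A: "?A \<in> carrier_mat n n" and MA: "?M * ?A = 1\<^sub>m n" and AM: "?A * ?M = 1\<^sub>m n"
    using A_props[OF a] by auto
  show ?thesis unfolding mat_inv_def
  proof (rule some_equality)
    show "?M \<in> carrier_mat (dim_row ?A) (dim_row ?A) \<and> inverts_mat ?A ?M \<and> inverts_mat ?M ?A"
      using A AM MA unfolding inverts_mat_def by auto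
  next
    fix B assume "B \<in> carrier_mat (dim_row ?A) (dim_row ?A) \<and> inverts_mat ?A B \<and> inverts_mat B ?A"
    hence B: "B \<in> carrier_mat n n" and AB: "?A * B = 1\<^sub>m n" using A unfolding inverts_mat_def by auto
    have "B = (?M * ?A) * B" using B MA by simp
    also have "\<dots> = ?M * (?A * B)" using A B by (simp add: assoc_mult_mat[of _ n n _ n _ n])
    also have "\<dots> = ?M" using AB by simp
    finally show "B = ?M" .
  qed
qed

lemma zsgn: "z * cnj (sgn z) = complex_of_real (cmod z)"
proof (cases "z = 0")
  case True then show ?thesis by simp
next
  case False
  hence c: "cmod z \<noteq> 0" by simp
  have "sgn z = z / complex_of_real (cmod z)" by (simp add: sgn_div_norm scaleR_conv_of_real divide_inverse mult.commute)
  hence "z * cnj (sgn z) = (z * cnj z) / complex_of_real (cmod z)" by simp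
  also have "z * cnj z = complex_of_real (cmod z) * complex_of_real (cmod z)"
    using complex_norm_square[of z] by (simp add: power2_eq_square)
  finally show ?thesis using c by simp
qed

lemma norm_sgn_cnj_le: "cmod (cnj (sgn z)) \<le> 1"
  by (simp add: norm_sgn)

lemma MA_vec:
  assumes a: "\<alpha> > 0" and y: "y \<in> carrier_vec n"
  shows "Mm \<alpha> n *\<^sub>v (Amat \<alpha> n *\<^sub>v y) = y"
proof -
  have A: "Amat \<alpha> n \<in> carrier_mat n n" and MA: "Mm \<alpha> n * Amat \<alpha> n = 1\<^sub>m n"
    using A_props[OF a] by auto
  have "Mm \<alpha> n *\<^sub>v (Amat \<alpha> n *\<^sub>v y) = (Mm \<alpha> n * Amat \<alpha> n) *\<^sub>v y"
    using A y by (simp add: assoc_mult_mat_vec[of _ n n _ n])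
  also have "\<dots> = y" unfolding MA using y by simp
  finally show ?thesis .
qed

lemma norm_A:
  assumes a: "\<alpha> > 0" and n: "n \<ge> 1"
  shows "norm_inf_mat (Amat \<alpha> n) \<le> 2 / \<alpha>"
proof -
  let ?A = "Amat \<alpha> n"
  have A: "?A \<in> carrier_mat n n" using A_props[OF a] by auto
  have row: "(\<Sum>j<n. cmod (?A $$ (i,j))) \<le> 2 / \<alpha>" if i: "i < n" for i
  proof -
    define y where "y = vec n (\<lambda>j. cnj (sgn (?A $$ (i,j))))"
    define u where "u = ?A *\<^sub>v y"
    have y: "y \<in> carrier_vec n" unfolding y_def by simp
    have u: "u \<in> carrier_vec n" unfolding u_def using A y by simp
    have My: "Mm \<alpha> n *\<^sub>v u = y" unfolding u_def by (rule MA_vec[OF a y])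
    have Y: "\<forall>k<n. cmod (of_real \<alpha> * u $ k + Cf n (\<lambda>j. u $ j) k) \<le> 1"
    proof (intro allI impI)
      fix k assume k: "k < n"
      have "of_real \<alpha> * u $ k + Cf n (\<lambda>j. u $ j) k = y $ k"
        using Mm_mult[OF u k, of \<alpha>] My by simp
      also have "y $ k = cnj (sgn (?A $$ (i,k)))" unfolding y_def using k by simp
      finally show "cmod (of_real \<alpha> * u $ k + Cf n (\<lambda>j. u $ j) k) \<le> 1"
        using norm_sgn_cnj_le by simp
    qed
    define S where "S = (\<Sum>j<n. cmod (?A $$ (i,j)))"
    have ub: "cmod (u $ i) \<le> 2 * 1 / \<alpha>" by (rule bound_sol[OF a Y i])
    have ui: "u $ i = complex_of_real (\<Sum>j<n. cmod (?A $$ (i,j)))"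
    proof -
      have "u $ i = (\<Sum>j\<in>{0..<n}. ?A $$ (i,j) * y $ j)"
        unfolding u_def using A i y by (simp add: scalar_prod_def)
      also have "\<dots> = (\<Sum>j<n. complex_of_real (cmod (?A $$ (i,j))))"
        unfolding y_def by (intro sum.cong) (auto simp: zsgn)
      finally show ?thesis by (simp only: of_real_sum)
    qed
    have "S \<ge> 0" unfolding S_def by (simp add: sum_nonneg)
    hence "cmod (complex_of_real S) = S" by (simp only: norm_of_real abs_of_nonneg)
    thus ?thesis using ub ui unfolding S_def[symmetric] by simp
  qed
  have set: "{\<Sum>j<dim_col ?A. cmod (?A $$ (i,j)) | i. i < dim_row ?A} = (\<lambda>i. \<Sum>j<n. cmod (?A $$ (i,j))) ` {..<n}"
    using A by auto
  have "0 \<in> {..<n}" using n by simp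
  hence ne: "(\<lambda>i. \<Sum>j<n. cmod (?A $$ (i,j))) ` {..<n} \<noteq> {}" by blast
  show ?thesis unfolding norm_inf_mat_def set
    using ne row by (subst Max_le_iff) auto
qed

lemma eig_A:
  assumes a: "\<alpha> > 0" and ev: "eigenvalue (Amat \<alpha> n) z"
  shows "1 / (\<alpha> + 4) \<le> cmod z"
proof -
  let ?A = "Amat \<alpha> n" and ?M = "Mm \<alpha> n"
  have A: "?A \<in> carrier_mat n n" using A_props[OF a] by auto
  obtain v where v: "v \<in> carrier_vec n" and v0: "v \<noteq> 0\<^sub>v n" and Av: "?A *\<^sub>v v = z \<cdot>\<^sub>v v"
    using ev A unfolding eigenvalue_def eigenvector_def by auto
  have "?M *\<^sub>v (z \<cdot>\<^sub>v v) = v" using MA_vec[OF a v] Av by simp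
  hence "z \<cdot>\<^sub>v (?M *\<^sub>v v) = v" using mult_mat_vec[OF Mm_carrier v] by simp
  hence vk: "v $ k = z * (?M *\<^sub>v v) $ k" if "k < n" for k
    using that by (metis Mm_dims(1) dim_mult_mat_vec index_smult_vec(1))
  obtain k0 where k0: "k0 < n" "v $ k0 \<noteq> 0"
  proof -
    have "\<exists>k<n. v $ k \<noteq> 0"
    proof (rule ccontr)
      assume "\<not> ?thesis"
      hence "v = 0\<^sub>v n" using v by (intro eq_vecI) auto
      thus False using v0 by simp
    qed
    thus ?thesis using that by auto
  qed
  have z0: "z \<noteq> 0" using vk[OF k0(1)] k0(2) by auto
  have evf: "\<forall>k<n. of_real \<alpha> * v $ k + Cf n (\<lambda>j. v $ j) k = (1 / z) * v $ k"
  proof (intro allI impI)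
    fix k assume k: "k < n"
    have "of_real \<alpha> * v $ k + Cf n (\<lambda>j. v $ j) k = (?M *\<^sub>v v) $ k" using Mm_mult[OF v k] by simp
    also have "\<dots> = (1 / z) * v $ k" using vk[OF k] z0 by simp
    finally show "of_real \<alpha> * v $ k + Cf n (\<lambda>j. v $ j) k = (1 / z) * v $ k" .
  qed
  have "cmod (1 / z) \<le> \<alpha> + 4" using eig_bound[of \<alpha> n "\<lambda>j. v $ j" "1 / z" k0] a evf k0 by auto
  hence "1 / cmod z \<le> \<alpha> + 4" by (simp add: norm_divide)
  moreover have "cmod z > 0" using z0 by simp
  ultimately show ?thesis using a by (simp add: field_simps)
qed

lemma Mm_sym_cnj:
  assumes "i < n" "j < n"
  shows "cnj (Mm \<alpha> n $$ (j,i)) = Mm \<alpha> n $$ (i,j)"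
  using assms by (auto simp: Mm_entry max.commute)

lemma herm_A:
  assumes a: "\<alpha> > 0"
  shows "hermitian_mat (Amat \<alpha> n)"
proof -
  let ?A = "Amat \<alpha> n" and ?M = "Mm \<alpha> n"
  have A: "?A \<in> carrier_mat n n" and MA: "?M * ?A = 1\<^sub>m n" and AM: "?A * ?M = 1\<^sub>m n"
    using A_props[OF a] by auto
  define B where "B = mat n n (\<lambda>(i,j). cnj (?A $$ (j,i)))"
  have B: "B \<in> carrier_mat n n" unfolding B_def by simp
  have BM: "B * ?M = 1\<^sub>m n"
  proof (rule eq_matI)
    fix i j assume "i < dim_row (1\<^sub>m n :: complex mat)" "j < dim_col (1\<^sub>m n :: complex mat)"
    hence i: "i < n" and j: "j < n" by auto
    have "(B * ?M) $$ (i,j) = (\<Sum>k\<in>{0..<n}. cnj (?A $$ (k,i)) * ?M $$ (k,j))"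
      using i j B by (simp add: scalar_prod_def B_def)
    also have "\<dots> = cnj (\<Sum>k\<in>{0..<n}. ?M $$ (j,k) * ?A $$ (k,i))"
      unfolding cnj_sum by (intro sum.cong refl) (simp add: Mm_sym_cnj j mult.commute)
    also have "(\<Sum>k\<in>{0..<n}. ?M $$ (j,k) * ?A $$ (k,i)) = (?M * ?A) $$ (j,i)"
      using i j A by (simp add: scalar_prod_def)
    also have "\<dots> = (if j = i then 1 else 0)" unfolding MA using i j by simp
    finally show "(B * ?M) $$ (i,j) = 1\<^sub>m n $$ (i,j)" using i j by auto
  qed (use B in auto)
  have "B = B * (?M * ?A)" using B MA by simp
  also have "\<dots> = (B * ?M) * ?A" using B A by (simp add: assoc_mult_mat[of _ n n _ n _ n])
  also have "\<dots> = ?A" unfolding BM using A by simp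
  finally have BA: "B = ?A" .
  show ?thesis unfolding hermitian_mat_def
  proof (intro conjI allI impI)
    show "square_mat ?A" using A by simp
    fix i j assume "i < dim_row ?A" "j < dim_row ?A"
    hence i: "i < n" and j: "j < n" using A by auto
    have "?A $$ (j,i) = B $$ (j,i)" using BA by simp
    also have "\<dots> = cnj (?A $$ (i,j))" unfolding B_def using i j by simp
    finally show "?A $$ (j,i) = cnj (?A $$ (i,j))" .
  qed
qed

lemma cscalar_expand:
  assumes "u \<in> carrier_vec n" "w \<in> carrier_vec n"
  shows "u \<bullet>c w = (\<Sum>k\<in>{0..<n}. u $ k * cnj (w $ k))"
  using assms by (simp add: scalar_prod_def)

lemma pd_A:
  assumes a: "\<alpha> > 0"
  shows "hermitian_pos_def (Amat \<alpha> n)"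
  unfolding hermitian_pos_def_def
proof (intro conjI ballI impI)
  let ?A = "Amat \<alpha> n" and ?M = "Mm \<alpha> n"
  have A: "?A \<in> carrier_mat n n" using A_props[OF a] by auto
  show "hermitian_mat ?A" by (rule herm_A[OF a])
  fix v :: "complex vec" assume "v \<in> carrier_vec (dim_row ?A)" and vnz: "v \<noteq> 0\<^sub>v (dim_row ?A)"
  hence v: "v \<in> carrier_vec n" and v0: "v \<noteq> 0\<^sub>v n" using A by auto
  define u where "u = ?A *\<^sub>v v"
  have u: "u \<in> carrier_vec n" unfolding u_def using A v by simp
  have Mu: "?M *\<^sub>v u = v" unfolding u_def by (rule MA_vec[OF a v])
  define uf where "uf = (\<lambda>j. u $ j)"
  have Muk: "(?M *\<^sub>v u) $ k = of_real \<alpha> * uf k + Cf n uf k" if "k < n" for k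
    unfolding uf_def by (rule Mm_mult[OF u that])
  obtain k0 where k0: "k0 < n" "u $ k0 \<noteq> 0"
  proof -
    have "\<exists>k<n. u $ k \<noteq> 0"
    proof (rule ccontr)
      assume "\<not> ?thesis"
      hence z: "\<And>k. k < n \<Longrightarrow> uf k = 0" unfolding uf_def by auto
      have "v = 0\<^sub>v n"
      proof (rule eq_vecI)
        fix k assume "k < dim_vec (0\<^sub>v n :: complex vec)"
        hence k: "k < n" by simp
        have "v $ k = of_real \<alpha> * uf k + Cf n uf k" using Muk[OF k] Mu by simp
        also have "\<dots> = 0" unfolding Cf_def using z k by simp
        finally show "v $ k = 0\<^sub>v n $ k" using k by simp
      qed (use v in simp)
      thus False using v0 by simp
    qed
    thus ?thesis using that by auto
  qed
  define R where "R = \<alpha> * (\<Sum>k<n. cmod (uf k) ^ 2) + (\<Sum>m<n. dw n m * cmod (\<Sum>j\<le>m. uf j) ^ 2)"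
  have q: "(?A *\<^sub>v v) \<bullet>c v = complex_of_real R"
  proof -
    have "(?A *\<^sub>v v) \<bullet>c v = u \<bullet>c (?M *\<^sub>v u)" unfolding Mu unfolding u_def ..
    also have "\<dots> = (\<Sum>k\<in>{0..<n}. uf k * cnj ((?M *\<^sub>v u) $ k))"
      unfolding uf_def by (rule cscalar_expand[OF u]) (rule mult_mat_vec_carrier[OF Mm_carrier u])
    also have "\<dots> = (\<Sum>k<n. complex_of_real (\<alpha> * cmod (uf k) ^ 2) + uf k * cnj (Cf n uf k))"
    proof (intro sum.cong)
      fix k assume "k \<in> {..<n}"
      hence k: "k < n" by simp
      have "uf k * cnj (uf k) = complex_of_real (cmod (uf k) ^ 2)"
        by (simp only: complex_norm_square)
      hence "uf k * cnj (of_real \<alpha> * uf k) = complex_of_real (\<alpha> * cmod (uf k) ^ 2)"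
        by (simp add: mult.left_commute)
      thus "uf k * cnj ((?M *\<^sub>v u) $ k) = complex_of_real (\<alpha> * cmod (uf k) ^ 2) + uf k * cnj (Cf n uf k)"
        unfolding Muk[OF k] by (simp add: distrib_left)
    qed auto
    also have "\<dots> = complex_of_real (\<alpha> * (\<Sum>k<n. cmod (uf k) ^ 2)) + (\<Sum>k<n. uf k * cnj (Cf n uf k))"
      by (simp add: sum.distrib sum_distrib_left)
    also have "(\<Sum>k<n. uf k * cnj (Cf n uf k)) = complex_of_real (\<Sum>m<n. dw n m * cmod (\<Sum>j\<le>m. uf j) ^ 2)"
      by (rule psd_sum)
    finally show ?thesis unfolding R_def by simp
  qed
  have "0 < cmod (uf k0) ^ 2" using k0 unfolding uf_def by simp
  also have "\<dots> \<le> (\<Sum>k<n. cmod (uf k) ^ 2)"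
    using k0 by (intro member_le_sum) auto
  finally have p1: "0 < \<alpha> * (\<Sum>k<n. cmod (uf k) ^ 2)" using a by simp
  have p2: "0 \<le> (\<Sum>m<n. dw n m * cmod (\<Sum>j\<le>m. uf j) ^ 2)"
    by (intro sum_nonneg mult_nonneg_nonneg dw_nonneg) auto
  have "R > 0" unfolding R_def using p1 p2 by linarith
  thus "let q = (?A *\<^sub>v v) \<bullet>c v in q \<in> \<real> \<and> 0 < Re q"
    unfolding q Let_def by simp
qed

lemma harm_ln: "ln (real n + 1) \<le> (\<Sum>j<n. 1 / real (j+1))"
proof (induction n)
  case 0 then show ?case by simp
next
  case (Suc n)
  have pos: "0 < real n + 1" by simp
  have "real (Suc n) + 1 = (real n + 1) * (1 + 1 / (real n + 1))"
    using pos by (simp add: field_simps)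
  have pos2: "0 < 1 + 1 / (real n + 1)" using pos by (simp add: add_pos_pos)
  have "ln (real (Suc n) + 1) = ln (real n + 1) + ln (1 + 1 / (real n + 1))"
    unfolding \<open>real (Suc n) + 1 = _\<close> by (rule ln_mult_pos[OF pos pos2])
  also have "\<dots> \<le> (\<Sum>j<n. 1 / real (j+1)) + 1 / (real n + 1)"
    using Suc ln_add_one_self_le_self[of "1 / (real n + 1)"] by simp
  finally show ?case by (simp add: add.commute)
qed

lemma norm_M_ge:
  assumes a: "\<alpha> \<ge> 0" and n: "n \<ge> 1"
  shows "(\<Sum>j<n. 1 / real (j+1)) \<le> norm_inf_mat (Mm \<alpha> n)"
proof -
  let ?M = "Mm \<alpha> n"
  have set: "{\<Sum>j<dim_col ?M. cmod (?M $$ (i,j)) | i. i < dim_row ?M} = (\<lambda>i. \<Sum>j<n. cmod (?M $$ (i,j))) ` {..<n}"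
    by auto
  have "(\<Sum>j<n. 1 / real (j+1)) \<le> (\<Sum>j<n. cmod (?M $$ (0,j)))"
  proof (intro sum_mono)
    fix j assume "j \<in> {..<n}"
    hence j: "j < n" by simp
    have "?M $$ (0,j) = complex_of_real ((if 0 = j then \<alpha> else 0) + 1 / real (max (0+1) (j+1)))"
      using Mm_entry[of 0 n j \<alpha>] n j by simp
    hence "cmod (?M $$ (0,j)) = \<bar>(if 0 = j then \<alpha> else 0) + 1 / real (j+1)\<bar>"
      by (simp only: norm_of_real)
    thus "1 / real (j+1) \<le> cmod (?M $$ (0,j))" using a by auto
  qed
  also have "\<dots> \<le> norm_inf_mat ?M"
    unfolding norm_inf_mat_def set using n by (intro Max_ge) auto
  finally show ?thesis .
qed

theorem proposition9:
  fixes \<alpha> :: real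
  assumes "\<alpha> > 0"
  shows "(\<forall>n \<ge> 1. hermitian_pos_def (Amat \<alpha> n))
    \<and> (INF n \<in> {1..}. Min (cmod ` spectrum_mat (Amat \<alpha> n))) > 0
    \<and> bdd_above ((\<lambda>n. norm_inf_mat (Amat \<alpha> n)) ` {1..})
    \<and> \<not> bdd_above ((\<lambda>n. norm_inf_mat (mat_inv (Amat \<alpha> n))) ` {1..})"
proof (intro conjI)
  note a = assms
  show "\<forall>n \<ge> 1. hermitian_pos_def (Amat \<alpha> n)" using pd_A[OF a] by auto
  have mn: "1 / (\<alpha> + 4) \<le> Min (cmod ` spectrum_mat (Amat \<alpha> n))" if n: "n \<in> {1..}" for n
  proof -
    have A: "Amat \<alpha> n \<in> carrier_mat n n" using A_props[OF a] by auto
    have sp: "spectrum_mat (Amat \<alpha> n) = spectrum (Amat \<alpha> n)"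
      unfolding spectrum_mat_def spectrum_def by simp
    have fin: "finite (spectrum_mat (Amat \<alpha> n))" unfolding sp using card_finite_spectrum[OF A] by simp
    have ne: "spectrum_mat (Amat \<alpha> n) \<noteq> {}" unfolding sp using spectrum_non_empty[OF A] n by simp
    show ?thesis using fin ne eig_A[OF a]
      by (subst Min_ge_iff) (auto simp: spectrum_mat_def)
  qed
  have "1 / (\<alpha> + 4) \<le> (INF n \<in> {1..}. Min (cmod ` spectrum_mat (Amat \<alpha> n)))"
    by (rule cINF_greatest) (use mn in auto)
  moreover have "0 < 1 / (\<alpha> + 4)" using a by simp
  ultimately show "(INF n \<in> {1..}. Min (cmod ` spectrum_mat (Amat \<alpha> n))) > 0" by linarith
  show "bdd_above ((\<lambda>n. norm_inf_mat (Amat \<alpha> n)) ` {1..})"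
    by (rule bdd_aboveI2[where M = "2 / \<alpha>"]) (use norm_A[OF a] in auto)
  show "\<not> bdd_above ((\<lambda>n. norm_inf_mat (mat_inv (Amat \<alpha> n))) ` {1..})"
  proof
    assume "bdd_above ((\<lambda>n. norm_inf_mat (mat_inv (Amat \<alpha> n))) ` {1..})"
    then obtain B where B: "\<And>n. n \<ge> 1 \<Longrightarrow> norm_inf_mat (mat_inv (Amat \<alpha> n)) \<le> B"
      unfolding bdd_above_def by auto
    define n where "n = nat \<lceil>exp B\<rceil> + 1"
    have n1: "n \<ge> 1" unfolding n_def by simp
    have "exp B \<le> real (nat \<lceil>exp B\<rceil>)" by linarith
    moreover have "real n = real (nat \<lceil>exp B\<rceil>) + 1" unfolding n_def by (simp only: of_nat_add of_nat_1)
    ultimately have "exp B < real n + 1" by linarith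
    hence "ln (exp B) < ln (real n + 1)" by (subst ln_less_cancel_iff) auto
    hence "B < ln (real n + 1)" by simp
    also have "\<dots> \<le> (\<Sum>j<n. 1 / real (j+1))" by (rule harm_ln)
    also have "\<dots> \<le> norm_inf_mat (Mm \<alpha> n)" using norm_M_ge[of \<alpha> n] a n1 by simp
    also have "\<dots> = norm_inf_mat (mat_inv (Amat \<alpha> n))" using inv_Amat[OF a] by simp
    also have "\<dots> \<le> B" using B[OF n1] .
    finally show False by simp
  qed
qed

end
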